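(* Suppose Assumptions 1–4 hold, and suppose that there is $\theta_0=(\beta_0,\gamma_0)\in\mathrm{int}(\Theta^c)$ such that, almost surely, $\mu(X)=X'\beta_0$ and $\sigma(X)^2=s(X'\gamma_0)^2$. Then $\theta_0$ is the unique minimizer of $Q(\theta)$ over $\Theta$.
   Context: Let $Y$ be a scalar random variable and $X$ a random $k\times1$ vector whose first component equals $1$; let $\mathcal{X}$ denote the support of $X$. Write $\mu(X)=E[Y\mid X]$ and $\sigma(X)^2=E[(Y-\mu(X))^2\mid X]$. Let $s$ be a positive scale function, write $s_j(t)=\partial^j s(t)/\partial t^j$ for $j=1,2,3$, and set $\Theta_\gamma=\{\gamma\in\mathbb{R}^k:\Pr[s(X'\gamma)>0]=1\}$ and $\Theta=\mathbb{R}^k\times\Theta_\gamma$. For $\theta=(\beta,\gamma)\in\Theta$ put $e(Y,X,\theta)=(Y-X'\beta)/s(X'\gamma)$ and $Q(\theta)=E\big[\tfrac12\{e(Y,X,\theta)^2+1\}s(X'\gamma)\big]$. Let $\Theta^c=\{\theta\in\Theta:\|\theta\|\le C_\theta,\ \inf_{x\in\mathcal{X}}s(x'\gamma)\ge C_s\}$ for a finite constant $C_\theta$ and a constant $C_s>0$, and let $\mathrm{int}(\Theta^c)$ denote its interior. Assumption 1: for $a=0$ or $a=-\infty$, $s:(a,\infty)\to(0,\infty)$ is three times differentiable, strictly increasing and convex, with $\lim_{t\to a}s(t)=0$ and $\lim_{t\to\infty}s(t)=\infty$. Assumption 2: $x\mapsto\sigma(x)^2$ is bounded away from $0$ uniformly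 on $\mathcal{X}$. Assumption 3: (i) $E[Y^4]<\infty$ and $E\|X\|^4<\infty$; (ii) for all $\gamma\in\Theta_\gamma$, $E[\|X\|^4s_2(X'\gamma)^2]<\infty$, $E[\|X\|^6s_3(X'\gamma)^2]<\infty$ and $E[\|X\|^6s_1(X'\gamma)^2s_2(X'\gamma)^2]<\infty$. Assumption 4: for all $\gamma\in\Theta_\gamma$, $E[XX'/s(X'\gamma)]$ is nonsingular. *)

theory Defs
  imports "HOL-Probability.Probability"
begin

definition sdom :: "ereal \<Rightarrow> real set" where
  "sdom a = {t. a < ereal t}"

definition scale_assm :: "ereal \<Rightarrow> (real \<Rightarrow> real) \<Rightarrow> (real \<Rightarrow> real) \<Rightarrow> (real \<Rightarrow> real) \<Rightarrow> (real \<Rightarrow> real) \<Rightarrow> bool" where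
  "scale_assm a s s1 s2 s3 \<longleftrightarrow>
     (a = 0 \<or> a = -\<infinity>) \<and>
     (\<forall>t\<in>sdom a. 0 < s t) \<and>
     (\<forall>t\<in>sdom a. (s has_real_derivative s1 t) (at t) \<and>
                  (s1 has_real_derivative s2 t) (at t) \<and>
                  (s2 has_real_derivative s3 t) (at t)) \<and>
     strict_mono_on (sdom a) s \<and> convex_on (sdom a) s \<and>
     (s \<longlongrightarrow> 0) (if a = -\<infinity> then at_bot else at_right 0) \<and>
     filterlim s at_top at_top"

definition support_rv :: "'w measure \<Rightarrow> ('w \<Rightarrow> 'b::metric_space) \<Rightarrow> 'b set" where
  "support_rv M X = {x. \<forall>e>0. 0 < measure M (X -` ball x e \<inter> space M)}"

definition Theta_gamma :: "'w measure \<Rightarrow> ('w \<Rightarrow> real^'k) \<Rightarrow> ereal \<Rightarrow> (real \<Rightarrow> real) \<Rightarrow> (real^'k) set" where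
  "Theta_gamma M X a s =
     {g. measure M {w \<in> space M. a < ereal (X w \<bullet> g) \<and> 0 < s (X w \<bullet> g)} = 1}"

definition Theta :: "'w measure \<Rightarrow> ('w \<Rightarrow> real^'k) \<Rightarrow> ereal \<Rightarrow> (real \<Rightarrow> real) \<Rightarrow> ((real^'k) \<times> (real^'k)) set" where
  "Theta M X a s = UNIV \<times> Theta_gamma M X a s"

definition resid :: "(real \<Rightarrow> real) \<Rightarrow> real \<Rightarrow> real^'k \<Rightarrow> (real^'k) \<times> (real^'k) \<Rightarrow> real" where
  "resid s y x \<theta> = (y - x \<bullet> fst \<theta>) / s (x \<bullet> snd \<theta>)"

definition Qobj :: "'w measure \<Rightarrow> ('w \<Rightarrow> real) \<Rightarrow> ('w \<Rightarrow> real^'k) \<Rightarrow> (real \<Rightarrow> real) \<Rightarrow> (real^'k) \<times> (real^'k) \<Rightarrow> ennreal" where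
  "Qobj M Y X s \<theta> =
     (\<integral>\<^sup>+ w. ennreal (1/2 * ((resid s (Y w) (X w) \<theta>)\<^sup>2 + 1) * s (X w \<bullet> snd \<theta>)) \<partial>M)"

definition Theta_c :: "'w measure \<Rightarrow> ('w \<Rightarrow> real^'k) \<Rightarrow> ereal \<Rightarrow> (real \<Rightarrow> real) \<Rightarrow> real \<Rightarrow> real \<Rightarrow> ((real^'k) \<times> (real^'k)) set" where
  "Theta_c M X a s C\<theta> Cs =
     {\<theta> \<in> Theta M X a s. norm \<theta> \<le> C\<theta> \<and>
        (\<forall>x\<in>support_rv M X. a < ereal (x \<bullet> snd \<theta>) \<and> Cs \<le> s (x \<bullet> snd \<theta>))}"

definition sigX :: "'w measure \<Rightarrow> ('w \<Rightarrow> 'b::topological_space) \<Rightarrow> 'w measure" where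
  "sigX M X = vimage_algebra (space M) X borel"

end

theory Submission
  imports Defs
begin


context sigma_finite_subalgebra
begin

lemma nn_rce:
  assumes g: "integrable M g" and gpos: "\<And>x. g x \<ge> 0"
  shows "AE x in M. nn_cond_exp M F (\<lambda>x. ennreal (g x)) x = ennreal (real_cond_exp M F g x)"
proof -
  have gm[measurable]: "g \<in> borel_measurable M" using g by auto
  have "(\<integral>\<^sup>+ x. 1 * nn_cond_exp M F (\<lambda>x. ennreal (g x)) x \<partial>M) = (\<integral>\<^sup>+ x. 1 * ennreal (g x) \<partial>M)"
    by (rule nn_cond_exp_intg) auto
  also have "\<dots> < \<infinity>" using g gpos by (simp add: integrable_iff_bounded)
  finally have fin: "AE x in M. nn_cond_exp M F (\<lambda>x. ennreal (g x)) x \<noteq> \<infinity>"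
    by (intro nn_integral_PInf_AE) auto
  have z: "(\<lambda>x. ennreal (- g x)) = (\<lambda>x. 0)" using gpos by (simp add: ennreal_neg)
  have "AE x in M. 0 = nn_cond_exp M F (\<lambda>x. 0) x"
    by (rule nn_cond_exp_F_meas, auto)
  with fin show ?thesis
    unfolding real_cond_exp_def z
    by eventually_elim (auto simp: ennreal_enn2real_if)
qed

lemma nn_rce_intg:
  assumes g: "integrable M g" and gpos: "\<And>x. g x \<ge> 0"
    and h[measurable]: "h \<in> borel_measurable F" and hpos: "\<And>x. h x \<ge> 0"
  shows "(\<integral>\<^sup>+ x. ennreal (h x * g x) \<partial>M) = (\<integral>\<^sup>+ x. ennreal (h x * real_cond_exp M F g x) \<partial>M)"
proof -
  have gm[measurable]: "g \<in> borel_measurable M" using g by auto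
  have "(\<integral>\<^sup>+ x. ennreal (h x * g x) \<partial>M) = (\<integral>\<^sup>+ x. ennreal (h x) * ennreal (g x) \<partial>M)"
    using hpos gpos by (simp add: ennreal_mult)
  also have "\<dots> = (\<integral>\<^sup>+ x. ennreal (h x) * nn_cond_exp M F (\<lambda>x. ennreal (g x)) x \<partial>M)"
    by (rule nn_cond_exp_intg[symmetric]) auto
  also have "\<dots> = (\<integral>\<^sup>+ x. ennreal (h x * real_cond_exp M F g x) \<partial>M)"
  proof (rule nn_integral_cong_AE)
    have pos: "AE x in M. real_cond_exp M F g x \<ge> 0" using gpos by (intro real_cond_exp_pos) auto
    show "AE x in M. ennreal (h x) * nn_cond_exp M F (\<lambda>x. ennreal (g x)) x = ennreal (h x * real_cond_exp M F g x)"
      using nn_rce[OF g gpos] pos by eventually_elim (simp add: hpos ennreal_mult)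
  qed
  finally show ?thesis .
qed

end



lemma inv_zero:
  fixes A :: "real^'k^'k"
  assumes "invertible A" "A *v v = 0"
  shows "v = 0"
proof -
  obtain B where "B ** A = mat 1" using assms(1) unfolding invertible_def by blast
  then have "v = B *v (A *v v)" by (simp add: matrix_vector_mul_assoc)
  then show ?thesis using assms(2) by simp
qed

lemma vanish:
  fixes X :: "'w \<Rightarrow> real^'k" and f :: "'w \<Rightarrow> real"
  assumes int: "\<forall>i j. integrable M (\<lambda>w. X w $ i * X w $ j / f w)"
   and inv: "invertible (\<chi> i j. integral\<^sup>L M (\<lambda>w. X w $ i * X w $ j / f w))"
   and ae: "AE w in M. X w \<bullet> v = 0"
  shows "v = 0"
proof (rule inv_zero[OF inv])
  show "(\<chi> i j. integral\<^sup>L M (\<lambda>w. X w $ i * X w $ j / f w)) *v v = 0"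
  proof (rule vec_eq_iff[THEN iffD2], rule allI)
    fix i
    have "((\<chi> i j. integral\<^sup>L M (\<lambda>w. X w $ i * X w $ j / f w)) *v v) $ i
        = (\<Sum>j\<in>UNIV. integral\<^sup>L M (\<lambda>w. X w $ i * X w $ j / f w) * v $ j)"
      by (simp add: matrix_vector_mult_def)
    also have "\<dots> = (\<Sum>j\<in>UNIV. integral\<^sup>L M (\<lambda>w. X w $ i * X w $ j / f w * v $ j))"
      by (simp only: integral_mult_left_zero)
    also have "\<dots> = integral\<^sup>L M (\<lambda>w. \<Sum>j\<in>UNIV. X w $ i * X w $ j / f w * v $ j)"
      by (rule Bochner_Integration.integral_sum[where f="\<lambda>j w. X w $ i * X w $ j / f w * v $ j", symmetric])
         (use int in \<open>auto intro!: integrable_mult_left_iff[THEN iffD2] simp del: times_divide_eq_left\<close>)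
    also have "\<dots> = integral\<^sup>L M (\<lambda>w. 0)"
    proof (rule integral_cong_AE)
      show "(\<lambda>w. \<Sum>j\<in>UNIV. X w $ i * X w $ j / f w * v $ j) \<in> borel_measurable M"
        using int by (intro borel_measurable_sum borel_measurable_times borel_measurable_const) auto
      show "AE w in M. (\<Sum>j\<in>UNIV. X w $ i * X w $ j / f w * v $ j) = 0"
        using ae
      proof eventually_elim
        case (elim w)
        have "(\<Sum>j\<in>UNIV. X w $ i * X w $ j / f w * v $ j) = X w $ i / f w * (\<Sum>j\<in>UNIV. X w $ j * v $ j)"
          by (simp add: sum_distrib_left mult_ac)
        also have "(\<Sum>j\<in>UNIV. X w $ j * v $ j) = X w \<bullet> v" by (simp add: inner_vec_def)
        finally show ?case using elim by simp
      qed
    qed simp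
    finally show "((\<chi> i j. integral\<^sup>L M (\<lambda>w. X w $ i * X w $ j / f w)) *v v) $ i = 0 $ i" by simp
  qed
qed



lemma sq_le: "(z::real)\<^sup>2 \<le> 1 + z^4"
proof -
  have "0 \<le> (z\<^sup>2 - 1)\<^sup>2" by simp
  moreover have "(z\<^sup>2 - 1)\<^sup>2 = z^4 - 2*z\<^sup>2 + 1" by (simp add: power2_eq_square power4_eq_xxxx algebra_simps)
  moreover have "0 \<le> z\<^sup>2" by simp
  ultimately show ?thesis by linarith
qed
lemma abs_le_sq: "\<bar>z::real\<bar> \<le> 1 + z\<^sup>2"
proof (cases "\<bar>z\<bar> \<le> 1")
  case False
  then have "\<bar>z\<bar> * 1 \<le> \<bar>z\<bar> * \<bar>z\<bar>" by (intro mult_left_mono) auto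
  then show ?thesis by (simp add: power2_eq_square)
qed (simp add: add_increasing2)
lemma sq2: "((y::real) - b)\<^sup>2 \<le> 2 * y\<^sup>2 + 2 * b\<^sup>2"
proof -
  have "0 \<le> (y + b)\<^sup>2" by simp
  then show ?thesis by (simp add: power2_eq_square algebra_simps)
qed

lemma abs_mult_le: "\<bar>(a::real) * b\<bar> \<le> a\<^sup>2 + b\<^sup>2"
proof -
  have "0 \<le> (\<bar>a\<bar> - \<bar>b\<bar>)\<^sup>2" by simp
  then have "2 * (\<bar>a\<bar> * \<bar>b\<bar>) \<le> a\<^sup>2 + b\<^sup>2" by (simp add: power2_eq_square algebra_simps)
  moreover have "0 \<le> \<bar>a\<bar> * \<bar>b\<bar>" by simp
  ultimately have "\<bar>a\<bar> * \<bar>b\<bar> \<le> a\<^sup>2 + b\<^sup>2" by linarith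
  then show ?thesis by (simp add: abs_mult)
qed
lemma G_ge:
  fixes S S0 d :: real assumes "0 < S" "0 < S0"
  shows "S0 \<le> 1 / (2 * max S 0) * (S0\<^sup>2 + d\<^sup>2) + S / 2"
proof -
  have "0 \<le> (S - S0)\<^sup>2 + d\<^sup>2" by simp
  then have "2 * S * S0 \<le> S0\<^sup>2 + d\<^sup>2 + S\<^sup>2" by (simp add: power2_eq_square algebra_simps)
  then show ?thesis using assms by (simp add: max_def field_simps power2_eq_square)
qed
lemma G_eq:
  fixes S S0 d :: real assumes "0 < S" "0 < S0"
   and "1 / (2 * max S 0) * (S0\<^sup>2 + d\<^sup>2) + S / 2 \<le> S0"
  shows "S = S0 \<and> d = 0"
proof -
  have "S0\<^sup>2 + d\<^sup>2 + S\<^sup>2 \<le> 2 * S * S0" using assms by (simp add: max_def field_simps power2_eq_square)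
  then have "(S - S0)\<^sup>2 + d\<^sup>2 \<le> 0" by (simp add: power2_eq_square algebra_simps)
  moreover have "0 \<le> (S - S0)\<^sup>2" "0 \<le> d\<^sup>2" by simp_all
  ultimately have "(S - S0)\<^sup>2 = 0" "d\<^sup>2 = 0" by linarith+
  then show ?thesis by simp
qed
lemma sqb: "\<bar>a\<bar> \<le> b \<Longrightarrow> (a::real)\<^sup>2 \<le> b\<^sup>2"
  by (metis abs_ge_zero power2_abs power_mono)

lemma resid_alg: "0 < (S::real) \<Longrightarrow> 1/2 * ((r / S)\<^sup>2 + 1) * S = 1 / (2 * max S 0) * r\<^sup>2 + S / 2"
  by (simp add: field_simps power2_eq_square)
lemma q0_alg: "0 < (S::real) \<Longrightarrow> 1 / (2 * max S 0) * (S\<^sup>2 + 0\<^sup>2) + S / 2 = S"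
  by (simp add: field_simps power2_eq_square)

theorem theorem1:
  fixes M :: "'w measure"
    and Y :: "'w \<Rightarrow> real"
    and X :: "'w \<Rightarrow> real^'k"
    and i1 :: 'k
    and a :: ereal and s s1 s2 s3 :: "real \<Rightarrow> real"
    and mu sigma2 :: "real^'k \<Rightarrow> real"
    and C\<theta> Cs :: real
    and \<beta>0 \<gamma>0 :: "real^'k"
  assumes prob: "prob_space M"
    and Y_meas: "Y \<in> borel_measurable M"
    and X_meas: "X \<in> borel_measurable M"
    and X_first: "\<forall>w\<in>space M. X w $ i1 = 1"
    and mu_meas: "mu \<in> borel_measurable borel"
    and sigma2_meas: "sigma2 \<in> borel_measurable borel"
    and mu_def: "AE w in M. mu (X w) = real_cond_exp M (sigX M X) Y w"
    and sigma2_def: "AE w in M. sigma2 (X w) =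
                       real_cond_exp M (sigX M X) (\<lambda>v. (Y v - mu (X v))\<^sup>2) w"
    and A1: "scale_assm a s s1 s2 s3"
    and A2: "\<exists>c>0. \<forall>x\<in>support_rv M X. c \<le> sigma2 x"
    and A3i: "integrable M (\<lambda>w. (Y w)^4)" "integrable M (\<lambda>w. (norm (X w))^4)"
    and A3ii: "\<forall>g\<in>Theta_gamma M X a s.
                 integrable M (\<lambda>w. (norm (X w))^4 * (s2 (X w \<bullet> g))\<^sup>2) \<and>
                 integrable M (\<lambda>w. (norm (X w))^6 * (s3 (X w \<bullet> g))\<^sup>2) \<and>
                 integrable M (\<lambda>w. (norm (X w))^6 * (s1 (X w \<bullet> g))\<^sup>2 * (s2 (X w \<bullet> g))\<^sup>2)"
    and A4: "\<forall>g\<in>Theta_gamma M X a s.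
               (\<forall>i j. integrable M (\<lambda>w. X w $ i * X w $ j / s (X w \<bullet> g))) \<and>
               invertible (\<chi> i j. integral\<^sup>L M (\<lambda>w. X w $ i * X w $ j / s (X w \<bullet> g)))"
    and \<theta>0_int: "(\<beta>0, \<gamma>0) \<in> interior (Theta_c M X a s C\<theta> Cs)"
    and Cs_pos: "0 < Cs"
    and mean_correct: "AE w in M. mu (X w) = X w \<bullet> \<beta>0"
    and var_correct: "AE w in M. sigma2 (X w) = (s (X w \<bullet> \<gamma>0))\<^sup>2"
  shows "(\<beta>0, \<gamma>0) \<in> Theta M X a s \<and>
         (\<forall>\<theta>\<in>Theta M X a s. \<theta> \<noteq> (\<beta>0, \<gamma>0) \<longrightarrow> Qobj M Y X s (\<beta>0, \<gamma>0) < Qobj M Y X s \<theta>)"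
proof -
  interpret P: prob_space M by (rule prob)
  define F where "F = sigX M X"
  have subalg: "subalgebra M F" unfolding F_def sigX_def subalgebra_def
    using sets_image_in_sets[of M "space M" X borel] X_meas by auto
  interpret S: sigma_finite_subalgebra M F
    by (rule finite_measure_subalgebra_is_sigma_finite)
       (simp add: finite_measure_subalgebra_def finite_measure_subalgebra_axioms_def P.finite_measure_axioms subalg)
  note S.real_cond_exp_F_meas[simp del, rule del] S.real_cond_exp_cmult[simp del, rule del]
    S.real_cond_exp_cdiv[simp del, rule del] S.real_cond_exp_diff[simp del, rule del]
    S.real_cond_exp_nested_subalg[simp del, rule del] S.real_cond_exp_sum[simp del, rule del]
  have XF: "X \<in> measurable F borel" unfolding F_def sigX_def
    by (rule measurable_vimage_algebra1) auto
  have compF: "(\<lambda>w. h (X w)) \<in> borel_measurable F" if "h \<in> borel_measurable borel" for h :: "real^'k \<Rightarrow> real"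
    using measurable_compose[OF XF that] .
  note [measurable] = X_meas Y_meas
  have adom: "a = 0 \<or> a = -\<infinity>" using A1 unfolding scale_assm_def by blast
  have spos: "\<And>t. t \<in> sdom a \<Longrightarrow> 0 < s t" using A1 unfolding scale_assm_def by blast
  have smono: "strict_mono_on (sdom a) s" using A1 unfolding scale_assm_def by blast
  have sder: "\<And>t. t \<in> sdom a \<Longrightarrow> (s has_real_derivative s1 t) (at t)"
    using A1 unfolding scale_assm_def by blast
  have sdom_open: "open (sdom a)"
  proof -
    have "sdom a = {0<..} \<or> sdom a = UNIV" using adom unfolding sdom_def by auto
    then show ?thesis by auto
  qed
  have scont: "continuous_on (sdom a) s"
    using sder by (intro continuous_at_imp_continuous_on) (auto intro: DERIV_isCont)
  define sm where "sm t = (if t \<in> sdom a then s t else 1)" for t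
  have sm_meas[measurable]: "sm \<in> borel_measurable borel"
    unfolding sm_def using sdom_open scont
    by (intro borel_measurable_continuous_on_if) auto
  define Sg where "Sg g w = sm (X w \<bullet> g)" for g w
  have Sg_M[measurable]: "Sg g \<in> borel_measurable M" for g unfolding Sg_def by measurable
  have Sg_F: "Sg g \<in> borel_measurable F" for g unfolding Sg_def
    by (rule compF) measurable
  have inner_F: "(\<lambda>w. X w \<bullet> b) \<in> borel_measurable F" for b
    by (rule compF) measurable
  have dom_AE: "AE w in M. X w \<bullet> g \<in> sdom a \<and> 0 < Sg g w \<and> Sg g w = s (X w \<bullet> g)"
    if "g \<in> Theta_gamma M X a s" for g
  proof -
    define A where "A = {w \<in> space M. a < ereal (X w \<bullet> g) \<and> 0 < s (X w \<bullet> g)}"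
    have m1: "measure M A = 1" using that unfolding Theta_gamma_def A_def by simp
    have "A \<in> sets M"
      using m1 measure_notin_sets[of A M] by fastforce
    then have "AE w in M. w \<in> A" using m1 P.prob_eq_1 by blast
    then show ?thesis unfolding A_def Sg_def sm_def sdom_def by eventually_elim auto
  qed
  have th0: "(\<beta>0, \<gamma>0) \<in> Theta M X a s"
    using interior_subset \<theta>0_int unfolding Theta_c_def by blast
  then have g0: "\<gamma>0 \<in> Theta_gamma M X a s" unfolding Theta_def by auto
  have intY2: "integrable M (\<lambda>w. (Y w)\<^sup>2)"
  proof (rule Bochner_Integration.integrable_bound)
    show "integrable M (\<lambda>w. 1 + (Y w)^4)" using A3i(1) by simp
    show "AE w in M. norm ((Y w)\<^sup>2) \<le> norm (1 + (Y w)^4)"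
    proof (rule AE_I2)
      fix w have "0 \<le> (Y w)^4" by simp
      then show "norm ((Y w)\<^sup>2) \<le> norm (1 + (Y w)^4)" using sq_le[of "Y w"] by simp
    qed
  qed measurable
  have intY: "integrable M Y"
  proof (rule Bochner_Integration.integrable_bound)
    show "integrable M (\<lambda>w. 1 + (Y w)\<^sup>2)" using intY2 by simp
    show "AE w in M. norm (Y w) \<le> norm (1 + (Y w)\<^sup>2)"
    proof (rule AE_I2)
      fix w have "0 \<le> (Y w)\<^sup>2" by simp
      then show "norm (Y w) \<le> norm (1 + (Y w)\<^sup>2)" using abs_le_sq[of "Y w"] by simp
    qed
  qed measurable
  have intXv2: "integrable M (\<lambda>w. (X w \<bullet> v)\<^sup>2)" for v
  proof (rule Bochner_Integration.integrable_bound)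
    show "integrable M (\<lambda>w. (1 + (norm (X w))^4) * (norm v)\<^sup>2)"
      using A3i(2) by (intro integrable_mult_left integrable_add) auto
    show "AE w in M. norm ((X w \<bullet> v)\<^sup>2) \<le> norm ((1 + (norm (X w))^4) * (norm v)\<^sup>2)"
    proof (intro AE_I2)
      fix w
      have "(X w \<bullet> v)\<^sup>2 \<le> (norm (X w) * norm v)\<^sup>2"
        by (rule sqb[OF Cauchy_Schwarz_ineq2])
      also have "\<dots> = (norm (X w))\<^sup>2 * (norm v)\<^sup>2" by (simp add: power_mult_distrib)
      also have "\<dots> \<le> (1 + (norm (X w))^4) * (norm v)\<^sup>2"
        by (intro mult_right_mono sq_le) auto
      finally show "norm ((X w \<bullet> v)\<^sup>2) \<le> norm ((1 + (norm (X w))^4) * (norm v)\<^sup>2)" by simp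
    qed
  qed measurable
  have intXv: "integrable M (\<lambda>w. X w \<bullet> v)" for v
  proof (rule Bochner_Integration.integrable_bound)
    show "integrable M (\<lambda>w. 1 + (X w \<bullet> v)\<^sup>2)" using intXv2 by simp
    show "AE w in M. norm (X w \<bullet> v) \<le> norm (1 + (X w \<bullet> v)\<^sup>2)"
    proof (rule AE_I2)
      fix w have "0 \<le> (X w \<bullet> v)\<^sup>2" by simp
      then show "norm (X w \<bullet> v) \<le> norm (1 + (X w \<bullet> v)\<^sup>2)" using abs_le_sq[of "X w \<bullet> v"] by simp
    qed
  qed measurable
  define U where "U w = Y w - X w \<bullet> \<beta>0" for w
  have U_M[measurable]: "U \<in> borel_measurable M" unfolding U_def by measurable
  have intU: "integrable M U" unfolding U_def using intY intXv by auto
  have intU2: "integrable M (\<lambda>w. (U w)\<^sup>2)"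
  proof (rule Bochner_Integration.integrable_bound)
    show "integrable M (\<lambda>w. 2 * (Y w)\<^sup>2 + 2 * (X w \<bullet> \<beta>0)\<^sup>2)"
      using intY2 intXv2 by auto
    show "AE w in M. norm ((U w)\<^sup>2) \<le> norm (2 * (Y w)\<^sup>2 + 2 * (X w \<bullet> \<beta>0)\<^sup>2)"
      unfolding U_def using sq2 by (intro AE_I2) simp
  qed measurable
  note mu_meas[measurable] sigma2_meas[measurable]
  have mu_def': "AE w in M. mu (X w) = real_cond_exp M F Y w" using mu_def unfolding F_def .
  have sigma2_def': "AE w in M. sigma2 (X w) = real_cond_exp M F (\<lambda>v. (Y v - mu (X v))\<^sup>2) w"
    using sigma2_def unfolding F_def .
  have rceY: "AE w in M. real_cond_exp M F Y w = X w \<bullet> \<beta>0"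
    using mu_def' mean_correct by eventually_elim linarith
  have rceXb: "AE w in M. real_cond_exp M F (\<lambda>w. X w \<bullet> b) w = X w \<bullet> b" for b
    by (rule S.real_cond_exp_F_meas[OF intXv inner_F])
  have rceU: "AE w in M. real_cond_exp M F U w = 0"
  proof -
    have "AE w in M. real_cond_exp M F (\<lambda>w. Y w - X w \<bullet> \<beta>0) w
            = real_cond_exp M F Y w - real_cond_exp M F (\<lambda>w. X w \<bullet> \<beta>0) w"
      by (rule S.real_cond_exp_diff[OF intY intXv])
    then show ?thesis using rceY rceXb[of \<beta>0] unfolding U_def by eventually_elim linarith
  qed
  have sig: "AE w in M. sigma2 (X w) = (Sg \<gamma>0 w)\<^sup>2"
    using var_correct dom_AE[OF g0] by eventually_elim metis
  have aeUmu: "AE w in M. (U w)\<^sup>2 = (Y w - mu (X w))\<^sup>2"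
    using mean_correct unfolding U_def by eventually_elim simp
  have intYmu: "integrable M (\<lambda>v. (Y v - mu (X v))\<^sup>2)"
  proof -
    have m1: "(\<lambda>w. (U w)\<^sup>2) \<in> borel_measurable M" by measurable
    have m2: "(\<lambda>w. (Y w - mu (X w))\<^sup>2) \<in> borel_measurable M" by measurable
    show ?thesis using integrable_cong_AE[OF m1 m2 aeUmu] intU2 by simp
  qed
  have rceU2: "AE w in M. real_cond_exp M F (\<lambda>w. (U w)\<^sup>2) w = (Sg \<gamma>0 w)\<^sup>2"
  proof -
    have "AE w in M. real_cond_exp M F (\<lambda>w. (U w)\<^sup>2) w = real_cond_exp M F (\<lambda>v. (Y v - mu (X v))\<^sup>2) w"
      by (rule S.real_cond_exp_cong[OF aeUmu]) measurable
    then show ?thesis using sigma2_def' sig by eventually_elim linarith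
  qed
  have intV: "integrable M (\<lambda>w. (Y w - X w \<bullet> \<beta>)\<^sup>2)" for \<beta>
  proof (rule Bochner_Integration.integrable_bound)
    show "integrable M (\<lambda>w. 2 * (Y w)\<^sup>2 + 2 * (X w \<bullet> \<beta>)\<^sup>2)"
      using intY2 intXv2 by auto
    show "AE w in M. norm ((Y w - X w \<bullet> \<beta>)\<^sup>2) \<le> norm (2 * (Y w)\<^sup>2 + 2 * (X w \<bullet> \<beta>)\<^sup>2)"
      using sq2 by (intro AE_I2) simp
  qed measurable
  have rceV: "AE w in M. real_cond_exp M F (\<lambda>w. (Y w - X w \<bullet> \<beta>)\<^sup>2) w
                = (Sg \<gamma>0 w)\<^sup>2 + (X w \<bullet> (\<beta>0 - \<beta>))\<^sup>2" for \<beta>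
  proof -
    define d where "d w = X w \<bullet> (\<beta>0 - \<beta>)" for w
    have dF: "d \<in> borel_measurable F" unfolding d_def by (rule inner_F)
    have d2F: "(\<lambda>w. (d w)\<^sup>2) \<in> borel_measurable F"
      unfolding d_def using compF[of "\<lambda>x. (x \<bullet> (\<beta>0 - \<beta>))\<^sup>2"] by simp
    have d_M[measurable]: "d \<in> borel_measurable M" unfolding d_def by measurable
    have intd2: "integrable M (\<lambda>w. (d w)\<^sup>2)" unfolding d_def by (rule intXv2)
    have intdU: "integrable M (\<lambda>w. d w * U w)"
    proof (rule Bochner_Integration.integrable_bound)
      show "integrable M (\<lambda>w. (d w)\<^sup>2 + (U w)\<^sup>2)" using intd2 intU2 by simp
      show "AE w in M. norm (d w * U w) \<le> norm ((d w)\<^sup>2 + (U w)\<^sup>2)"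
      proof (rule AE_I2)
        fix w
        have "0 \<le> (d w)\<^sup>2 + (U w)\<^sup>2" by simp
        then show "norm (d w * U w) \<le> norm ((d w)\<^sup>2 + (U w)\<^sup>2)"
          using abs_mult_le[of "d w" "U w"] by simp
      qed
    qed measurable
    have eq: "(\<lambda>w. (Y w - X w \<bullet> \<beta>)\<^sup>2) = (\<lambda>w. (U w)\<^sup>2 + (2 * (d w * U w) + (d w)\<^sup>2))"
      unfolding U_def d_def by (auto simp: inner_diff_right power2_eq_square algebra_simps)
    have 1: "AE w in M. real_cond_exp M F (\<lambda>w. (U w)\<^sup>2 + (2 * (d w * U w) + (d w)\<^sup>2)) w
       = real_cond_exp M F (\<lambda>w. (U w)\<^sup>2) w + real_cond_exp M F (\<lambda>w. 2 * (d w * U w) + (d w)\<^sup>2) w"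
      by (rule S.real_cond_exp_add) (use intU2 intdU intd2 in auto)
    have 2: "AE w in M. real_cond_exp M F (\<lambda>w. 2 * (d w * U w) + (d w)\<^sup>2) w
       = real_cond_exp M F (\<lambda>w. 2 * (d w * U w)) w + real_cond_exp M F (\<lambda>w. (d w)\<^sup>2) w"
      by (rule S.real_cond_exp_add) (use intdU intd2 in auto)
    have 3: "AE w in M. real_cond_exp M F (\<lambda>w. 2 * (d w * U w)) w = 2 * real_cond_exp M F (\<lambda>w. d w * U w) w"
      by (rule S.real_cond_exp_cmult[OF intdU])
    have 4: "AE w in M. real_cond_exp M F (\<lambda>w. d w * U w) w = d w * real_cond_exp M F U w"
      by (rule S.real_cond_exp_mult[OF dF U_M intdU])
    have 5: "AE w in M. real_cond_exp M F (\<lambda>w. (d w)\<^sup>2) w = (d w)\<^sup>2"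
      by (rule S.real_cond_exp_F_meas[OF intd2 d2F])
    have 4: "AE w in M. real_cond_exp M F (\<lambda>w. d w * U w) w = 0"
      using 4 rceU by eventually_elim (simp only: mult_zero_right)
    show ?thesis unfolding eq using 1 2 3 4 5 rceU2 unfolding d_def by eventually_elim linarith
  qed
  have Qform: "Qobj M Y X s (\<beta>, \<gamma>) = (\<integral>\<^sup>+ w. ennreal (1 / (2 * max (Sg \<gamma> w) 0)
                  * ((Sg \<gamma>0 w)\<^sup>2 + (X w \<bullet> (\<beta>0 - \<beta>))\<^sup>2) + Sg \<gamma> w / 2) \<partial>M)"
    if g: "\<gamma> \<in> Theta_gamma M X a s" for \<beta> \<gamma>
  proof -
    define h where "h w = 1 / (2 * max (Sg \<gamma> w) 0)" for w
    have fb: "(\<lambda>x::real. 1 / (2 * max x 0)) \<in> borel_measurable borel" by measurable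
    have hF: "h \<in> borel_measurable F" unfolding h_def
      using measurable_compose[OF Sg_F fb] by simp
    have hM[measurable]: "h \<in> borel_measurable M" by (rule measurable_from_subalg[OF subalg hF])
    have hpos: "\<And>w. h w \<ge> 0" unfolding h_def by simp
    have A: "Qobj M Y X s (\<beta>,\<gamma>) = (\<integral>\<^sup>+ w. ennreal (h w * (Y w - X w \<bullet> \<beta>)\<^sup>2) + ennreal (Sg \<gamma> w / 2) \<partial>M)"
      unfolding Qobj_def
    proof (rule nn_integral_cong_AE)
      show "AE w in M. ennreal (1/2 * ((resid s (Y w) (X w) (\<beta>,\<gamma>))\<^sup>2 + 1) * s (X w \<bullet> snd (\<beta>,\<gamma>)))
              = ennreal (h w * (Y w - X w \<bullet> \<beta>)\<^sup>2) + ennreal (Sg \<gamma> w / 2)"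
        using dom_AE[OF g]
      proof eventually_elim
        case (elim w)
        then have p: "0 < Sg \<gamma> w" and e: "s (X w \<bullet> \<gamma>) = Sg \<gamma> w" by auto
        have eq: "1/2 * ((resid s (Y w) (X w) (\<beta>,\<gamma>))\<^sup>2 + 1) * s (X w \<bullet> snd (\<beta>,\<gamma>))
               = h w * (Y w - X w \<bullet> \<beta>)\<^sup>2 + Sg \<gamma> w / 2"
          unfolding resid_def h_def snd_conv fst_conv e using resid_alg[OF p, of "Y w - X w \<bullet> \<beta>"] by simp
        moreover have "0 \<le> h w * (Y w - X w \<bullet> \<beta>)\<^sup>2" using hpos[of w] by simp
        ultimately show ?case using p unfolding eq by (intro ennreal_plus) auto
      qed
    qed
    have B: "(\<integral>\<^sup>+ w. ennreal (h w * (Y w - X w \<bullet> \<beta>)\<^sup>2) + ennreal (Sg \<gamma> w / 2) \<partial>M)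
         = (\<integral>\<^sup>+ w. ennreal (h w * (Y w - X w \<bullet> \<beta>)\<^sup>2) \<partial>M) + (\<integral>\<^sup>+ w. ennreal (Sg \<gamma> w / 2) \<partial>M)"
      by (rule nn_integral_add) measurable
    have C: "(\<integral>\<^sup>+ w. ennreal (h w * (Y w - X w \<bullet> \<beta>)\<^sup>2) \<partial>M)
        = (\<integral>\<^sup>+ w. ennreal (h w * real_cond_exp M F (\<lambda>w. (Y w - X w \<bullet> \<beta>)\<^sup>2) w) \<partial>M)"
      by (rule S.nn_rce_intg[OF intV _ hF hpos]) simp
    have D: "\<dots> = (\<integral>\<^sup>+ w. ennreal (h w * ((Sg \<gamma>0 w)\<^sup>2 + (X w \<bullet> (\<beta>0 - \<beta>))\<^sup>2)) \<partial>M)"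
      by (rule nn_integral_cong_AE) (use rceV[of \<beta>] in \<open>eventually_elim, simp\<close>)
    have E: "(\<integral>\<^sup>+ w. ennreal (h w * ((Sg \<gamma>0 w)\<^sup>2 + (X w \<bullet> (\<beta>0 - \<beta>))\<^sup>2)) \<partial>M) + (\<integral>\<^sup>+ w. ennreal (Sg \<gamma> w / 2) \<partial>M)
        = (\<integral>\<^sup>+ w. ennreal (h w * ((Sg \<gamma>0 w)\<^sup>2 + (X w \<bullet> (\<beta>0 - \<beta>))\<^sup>2)) + ennreal (Sg \<gamma> w / 2) \<partial>M)"
      by (rule nn_integral_add[symmetric]) measurable
    have G: "\<dots> = (\<integral>\<^sup>+ w. ennreal (h w * ((Sg \<gamma>0 w)\<^sup>2 + (X w \<bullet> (\<beta>0 - \<beta>))\<^sup>2) + Sg \<gamma> w / 2) \<partial>M)"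
    proof (rule nn_integral_cong_AE)
      show "AE w in M. ennreal (h w * ((Sg \<gamma>0 w)\<^sup>2 + (X w \<bullet> (\<beta>0 - \<beta>))\<^sup>2)) + ennreal (Sg \<gamma> w / 2)
         = ennreal (h w * ((Sg \<gamma>0 w)\<^sup>2 + (X w \<bullet> (\<beta>0 - \<beta>))\<^sup>2) + Sg \<gamma> w / 2)"
        using dom_AE[OF g]
      proof eventually_elim
        case (elim w)
        have "0 \<le> h w * ((Sg \<gamma>0 w)\<^sup>2 + (X w \<bullet> (\<beta>0 - \<beta>))\<^sup>2)" using hpos[of w] by simp
        then show ?case using elim by (simp add: ennreal_plus)
      qed
    qed
    have "Qobj M Y X s (\<beta>, \<gamma>) = (\<integral>\<^sup>+ w. ennreal (h w * ((Sg \<gamma>0 w)\<^sup>2 + (X w \<bullet> (\<beta>0 - \<beta>))\<^sup>2) + Sg \<gamma> w / 2) \<partial>M)"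
      by (simp only: A B C D E G)
    then show ?thesis unfolding h_def .
  qed
  have intS0: "integrable M (Sg \<gamma>0)"
  proof (rule Bochner_Integration.integrable_bound)
    show "integrable M (\<lambda>w. 1 + real_cond_exp M F (\<lambda>v. (Y v - mu (X v))\<^sup>2) w)"
      using S.real_cond_exp_int(1)[OF intYmu] by simp
    show "AE w in M. norm (Sg \<gamma>0 w) \<le> norm (1 + real_cond_exp M F (\<lambda>v. (Y v - mu (X v))\<^sup>2) w)"
      using sigma2_def' sig
    proof eventually_elim
      case (elim w)
      have "0 \<le> (Sg \<gamma>0 w)\<^sup>2" by simp
      then show ?case using elim abs_le_sq[of "Sg \<gamma>0 w"] by simp
    qed
  qed measurable
  have Q0: "Qobj M Y X s (\<beta>0, \<gamma>0) = (\<integral>\<^sup>+ w. ennreal (Sg \<gamma>0 w) \<partial>M)"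
    unfolding Qform[OF g0]
  proof (rule nn_integral_cong_AE)
    show "AE w in M. ennreal (1 / (2 * max (Sg \<gamma>0 w) 0) * ((Sg \<gamma>0 w)\<^sup>2 + (X w \<bullet> (\<beta>0 - \<beta>0))\<^sup>2) + Sg \<gamma>0 w / 2)
            = ennreal (Sg \<gamma>0 w)"
      using dom_AE[OF g0]
    proof eventually_elim
      case (elim w)
      then show ?case using q0_alg[of "Sg \<gamma>0 w"] by simp
    qed
  qed
  have Q0fin: "(\<integral>\<^sup>+ w. ennreal (Sg \<gamma>0 w) \<partial>M) \<noteq> \<infinity>"
  proof -
    have "AE w in M. 0 \<le> Sg \<gamma>0 w" using dom_AE[OF g0] by eventually_elim simp
    then have "(\<integral>\<^sup>+ w. ennreal (Sg \<gamma>0 w) \<partial>M) = ennreal (integral\<^sup>L M (Sg \<gamma>0))"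
      by (rule nn_integral_eq_integral[OF intS0])
    then show ?thesis by simp
  qed
  have A4g0: "(\<forall>i j. integrable M (\<lambda>w. X w $ i * X w $ j / s (X w \<bullet> \<gamma>0))) \<and>
               invertible (\<chi> i j. integral\<^sup>L M (\<lambda>w. X w $ i * X w $ j / s (X w \<bullet> \<gamma>0)))"
    using A4 g0 by blast
  show ?thesis
  proof (intro conjI ballI impI th0)
    fix \<theta> assume th: "\<theta> \<in> Theta M X a s" and ne: "\<theta> \<noteq> (\<beta>0, \<gamma>0)"
    obtain \<beta> \<gamma> where \<theta>: "\<theta> = (\<beta>, \<gamma>)" by (cases \<theta>)
    have g: "\<gamma> \<in> Theta_gamma M X a s" using th \<theta> unfolding Theta_def by auto
    define G where "G w = 1 / (2 * max (Sg \<gamma> w) 0) * ((Sg \<gamma>0 w)\<^sup>2 + (X w \<bullet> (\<beta>0 - \<beta>))\<^sup>2) + Sg \<gamma> w / 2" for w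
    have G_M[measurable]: "G \<in> borel_measurable M" unfolding G_def by measurable
    have QG: "Qobj M Y X s \<theta> = (\<integral>\<^sup>+ w. ennreal (G w) \<partial>M)" unfolding \<theta> G_def by (rule Qform[OF g])
    have ae: "AE w in M. 0 < Sg \<gamma> w \<and> 0 < Sg \<gamma>0 w \<and> X w \<bullet> \<gamma> \<in> sdom a \<and> X w \<bullet> \<gamma>0 \<in> sdom a
                 \<and> Sg \<gamma> w = s (X w \<bullet> \<gamma>) \<and> Sg \<gamma>0 w = s (X w \<bullet> \<gamma>0)"
      using dom_AE[OF g] dom_AE[OF g0] by eventually_elim auto
    have Gge: "AE w in M. Sg \<gamma>0 w \<le> G w" using ae
    proof eventually_elim
      case (elim w) then show ?case unfolding G_def by (intro G_ge) auto
    qed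
    have split: "(\<integral>\<^sup>+ w. ennreal (G w) \<partial>M) = (\<integral>\<^sup>+ w. ennreal (G w - Sg \<gamma>0 w) \<partial>M) + (\<integral>\<^sup>+ w. ennreal (Sg \<gamma>0 w) \<partial>M)"
    proof -
      have "(\<integral>\<^sup>+ w. ennreal (G w) \<partial>M) = (\<integral>\<^sup>+ w. ennreal (G w - Sg \<gamma>0 w) + ennreal (Sg \<gamma>0 w) \<partial>M)"
      proof (rule nn_integral_cong_AE)
        show "AE w in M. ennreal (G w) = ennreal (G w - Sg \<gamma>0 w) + ennreal (Sg \<gamma>0 w)"
          using Gge ae
        proof eventually_elim
          case (elim w)
          then have "0 \<le> G w - Sg \<gamma>0 w" "0 \<le> Sg \<gamma>0 w" by auto
          then have "ennreal (G w - Sg \<gamma>0 w + Sg \<gamma>0 w) = ennreal (G w - Sg \<gamma>0 w) + ennreal (Sg \<gamma>0 w)"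
            by (rule ennreal_plus)
          then show ?case by simp
        qed
      qed
      also have "\<dots> = (\<integral>\<^sup>+ w. ennreal (G w - Sg \<gamma>0 w) \<partial>M) + (\<integral>\<^sup>+ w. ennreal (Sg \<gamma>0 w) \<partial>M)"
        by (rule nn_integral_add) measurable
      finally show ?thesis .
    qed
    show "Qobj M Y X s (\<beta>0, \<gamma>0) < Qobj M Y X s \<theta>"
    proof (rule ccontr)
      assume "\<not> Qobj M Y X s (\<beta>0, \<gamma>0) < Qobj M Y X s \<theta>"
      then have le: "Qobj M Y X s \<theta> \<le> Qobj M Y X s (\<beta>0, \<gamma>0)" by (simp add: not_less)
      have z: "(\<integral>\<^sup>+ w. ennreal (G w - Sg \<gamma>0 w) \<partial>M) = 0"
      proof -
        let ?a = "(\<integral>\<^sup>+ w. ennreal (G w - Sg \<gamma>0 w) \<partial>M)" and ?c = "(\<integral>\<^sup>+ w. ennreal (Sg \<gamma>0 w) \<partial>M)"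
        have "?c + ?a \<le> ?c + 0" using le QG split Q0 by (simp add: add.commute)
        then have "?a \<le> 0" using Q0fin ennreal_add_left_cancel_le by blast
        then show ?thesis by simp
      qed
      have "AE w in M. ennreal (G w - Sg \<gamma>0 w) = 0" using z by (subst (asm) nn_integral_0_iff_AE) auto
      then have eqs: "AE w in M. Sg \<gamma> w = Sg \<gamma>0 w \<and> X w \<bullet> (\<beta>0 - \<beta>) = 0"
        using ae Gge
      proof eventually_elim
        case (elim w)
        then have "G w \<le> Sg \<gamma>0 w" by (simp add: ennreal_eq_0_iff)
        then show ?case using elim G_eq[of "Sg \<gamma> w" "Sg \<gamma>0 w" "X w \<bullet> (\<beta>0 - \<beta>)"] unfolding G_def by auto
      qed
      have b: "\<beta>0 - \<beta> = 0"
      proof (rule vanish[OF conjunct1[OF A4g0] conjunct2[OF A4g0]])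
        show "AE w in M. X w \<bullet> (\<beta>0 - \<beta>) = 0" using eqs by eventually_elim simp
      qed
      have "AE w in M. X w \<bullet> (\<gamma> - \<gamma>0) = 0"
        using eqs ae
      proof eventually_elim
        case (elim w)
        then have "X w \<bullet> \<gamma>0 = X w \<bullet> \<gamma>"
          using strict_mono_on_eqD[OF smono, of "X w \<bullet> \<gamma>" "X w \<bullet> \<gamma>0"] by auto
        then show ?case by (simp add: inner_diff_right)
      qed
      then have c: "\<gamma> - \<gamma>0 = 0"
        by (rule vanish[OF conjunct1[OF A4g0] conjunct2[OF A4g0]])
      show False using b c ne \<theta> by simp
    qed
  qed
qed

end
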